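(* Let $n\ge2$ and let $X$ be a simple directed graph with vertex set $[n]$. Let $p,q\in[n]$ satisfy: - $p\to q\in E(X)$; - $q\to p\notin E(X)$; - $\{p,q\}$ is sink-equivalent in $X$. Then $$\mathrm{ODP}(X,\mathrm{Path}_n)_{p\to q}=x\cdot\mathrm{ODP}(X-q,\mathrm{Path}_{n-1}),$$ where $X-q$ is the induced subgraph of $X$ on $[n]\setminus\{q\}$.
   Context: $\mathrm{Path}_n$ is the directed graph on $[n]$ with edges $i\to i+1$ for $1\le i\le n-1$. For a simple directed graph $X$, a set $S\subseteq V(X)$ is sink-equivalent if for every $t\notin S$, either $s\to t\in E(X)$ for all $s\in S$, or $s\to t\notin E(X)$ for all $s\in S$. For directed graphs $X,Y$ with $|V(X)|=|V(Y)|$, $\mathrm{DFS}(X,Y)$ has as vertices the bijections $\sigma:V(X)\to V(Y)$. For each $\sigma$ and ordered pair $(a,b)$ of distinct vertices, it has $m_X(a,b)m_Y(\sigma(a),\sigma(b))$ edges from $\sigma$ to $\sigma\circ(a\,b)$, where $m_X(a,b)$ is the number of edges $a\to b$ in $X$. Thus $\mathrm{outdeg}(\sigma)=\sum_{a\ne b}m_X(a,b)m_Y(\sigma(a),\sigma(b))$ and $\mathrm{ODP}(X,Y)=\sum_\sigma x^{\mathrm{outdeg}(\sigma)}$. $\mathrm{ODP}(X,Y)_{a\to b}$ is the sum of $x^{\mathrm{outdeg}(\sigma)}$ over bijections $\sigma$ with $\sigma(a)\to\sigma(b)\in E(Y)$. *)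

theory Defs
  imports "HOL-Computational_Algebra.Polynomial" "HOL-Library.FuncSet"
begin

text \<open>A simple directed graph on vertex set V is given by an edge relation E
  (E a b means there is an edge a -> b); simple = no loops, at most one edge
  a -> b, and all edges lie inside V.\<close>
definition simple_digraph :: "'a set \<Rightarrow> ('a \<Rightarrow> 'a \<Rightarrow> bool) \<Rightarrow> bool" where
  "simple_digraph V E \<longleftrightarrow> (\<forall>a b. E a b \<longrightarrow> a \<in> V \<and> b \<in> V \<and> a \<noteq> b)"

definition path_edge :: "nat \<Rightarrow> nat \<Rightarrow> nat \<Rightarrow> bool" where
  "path_edge n i j \<longleftrightarrow> 1 \<le> i \<and> i + 1 \<le> n \<and> j = i + 1"

definition sink_equivalent :: "'a set \<Rightarrow> ('a \<Rightarrow> 'a \<Rightarrow> bool) \<Rightarrow> 'a set \<Rightarrow> bool" where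
  "sink_equivalent V E S \<longleftrightarrow> S \<subseteq> V \<and>
     (\<forall>t \<in> V - S. (\<forall>s \<in> S. E s t) \<or> (\<forall>s \<in> S. \<not> E s t))"

definition induced :: "('a \<Rightarrow> 'a \<Rightarrow> bool) \<Rightarrow> 'a set \<Rightarrow> 'a \<Rightarrow> 'a \<Rightarrow> bool" where
  "induced E S a b \<longleftrightarrow> a \<in> S \<and> b \<in> S \<and> E a b"

definition bijections :: "'a set \<Rightarrow> 'b set \<Rightarrow> ('a \<Rightarrow> 'b) set" where
  "bijections A B = {\<sigma>. bij_betw \<sigma> A B \<and> \<sigma> \<in> extensional A}"

text \<open>Out-degree of sigma in DFS(X,Y) for simple digraphs (multiplicities are 0/1).\<close>
definition outdeg :: "'a set \<Rightarrow> ('a \<Rightarrow> 'a \<Rightarrow> bool) \<Rightarrow> ('b \<Rightarrow> 'b \<Rightarrow> bool) \<Rightarrow> ('a \<Rightarrow> 'b) \<Rightarrow> nat" where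
  "outdeg VX EdX EdY \<sigma> = card {(a, b). a \<in> VX \<and> b \<in> VX \<and> a \<noteq> b \<and> EdX a b \<and> EdY (\<sigma> a) (\<sigma> b)}"

definition ODP :: "'a set \<Rightarrow> ('a \<Rightarrow> 'a \<Rightarrow> bool) \<Rightarrow> 'b set \<Rightarrow> ('b \<Rightarrow> 'b \<Rightarrow> bool) \<Rightarrow> int poly" where
  "ODP VX EdX VY EdY = (\<Sum>\<sigma> \<in> bijections VX VY. monom 1 (outdeg VX EdX EdY \<sigma>))"

definition ODP_edge :: "'a set \<Rightarrow> ('a \<Rightarrow> 'a \<Rightarrow> bool) \<Rightarrow> 'b set \<Rightarrow> ('b \<Rightarrow> 'b \<Rightarrow> bool) \<Rightarrow> 'a \<Rightarrow> 'a \<Rightarrow> int poly" where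
  "ODP_edge VX EdX VY EdY a b =
     (\<Sum>\<sigma> \<in> {\<sigma> \<in> bijections VX VY. EdY (\<sigma> a) (\<sigma> b)}. monom 1 (outdeg VX EdX EdY \<sigma>))"

end

theory Submission imports Defs begin

lemma bij_of_inj_card:
  assumes "finite B" "f ` A \<subseteq> B" "inj_on f A" "card A = card B"
  shows "bij_betw f A B"
  using assms card_image card_subset_eq unfolding bij_betw_def by metis

definition jmap :: "nat \<Rightarrow> nat \<Rightarrow> (nat \<Rightarrow> nat) \<Rightarrow> nat \<Rightarrow> nat" where
  "jmap n q \<sigma> = (\<lambda>v. if v \<in> {1..n} - {q} then (if \<sigma> v < \<sigma> q then \<sigma> v else \<sigma> v - 1) else undefined)"

definition imap :: "nat \<Rightarrow> nat \<Rightarrow> nat \<Rightarrow> (nat \<Rightarrow> nat) \<Rightarrow> nat \<Rightarrow> nat" where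
  "imap n p q \<tau> = (\<lambda>v. if v \<in> {1..n} then (if v = q then \<tau> p + 1 else if \<tau> v \<le> \<tau> p then \<tau> v else \<tau> v + 1) else undefined)"

lemma outdeg_step:
  fixes \<sigma> :: "nat \<Rightarrow> nat" and n p q :: nat and E :: "nat \<Rightarrow> nat \<Rightarrow> bool"
  defines "V \<equiv> {1..n}" and "S \<equiv> {1..n} - {q}"
  assumes inj: "inj_on \<sigma> V" and img: "\<sigma> ` V \<subseteq> V"
    and pV: "p \<in> V" and qV: "q \<in> V" and pq: "p \<noteq> q" and sq: "\<sigma> q = Suc (\<sigma> p)"
    and se: "\<And>b. b \<in> V \<Longrightarrow> b \<noteq> p \<Longrightarrow> b \<noteq> q \<Longrightarrow> E p b = E q b"
    and Epq: "E p q"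
    and sg: "\<And>a b. E a b \<Longrightarrow> a \<in> V \<and> b \<in> V \<and> a \<noteq> b"
  shows "outdeg V E (path_edge n) \<sigma> = Suc (outdeg S (induced E S) (path_edge (n - 1)) (jmap n q \<sigma>))"
proof -
  define \<tau> where "\<tau> = jmap n q \<sigma>"
  have \<tau>: "\<And>v. v \<in> S \<Longrightarrow> \<tau> v = (if \<sigma> v < \<sigma> q then \<sigma> v else \<sigma> v - 1)"
    unfolding \<tau>_def jmap_def S_def by auto
  have sV: "\<And>v. v \<in> V \<Longrightarrow> 1 \<le> \<sigma> v \<and> \<sigma> v \<le> n" using img unfolding V_def by (meson atLeastAtMost_iff image_subset_iff)
  have injD: "\<And>a b. a \<in> V \<Longrightarrow> b \<in> V \<Longrightarrow> \<sigma> a = \<sigma> b \<Longrightarrow> a = b" using inj by (meson inj_onD)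
  define P where "P = {(a, b). a \<in> V \<and> b \<in> V \<and> a \<noteq> b \<and> E a b \<and> path_edge n (\<sigma> a) (\<sigma> b)}"
  define P' where "P' = {(a, b). a \<in> S \<and> b \<in> S \<and> a \<noteq> b \<and> induced E S a b \<and> path_edge (n-1) (\<tau> a) (\<tau> b)}"
  define f where "f = (\<lambda>(a::nat, b::nat). (if a = p \<and> \<sigma> b = Suc (\<sigma> q) then q else a, b))"
  define g where "g = (\<lambda>(a::nat, b::nat). (if a = q then p else a, b))"
  have SV: "S \<subseteq> V" "q \<notin> S" "\<And>v. v \<in> V \<Longrightarrow> v \<noteq> q \<Longrightarrow> v \<in> S" unfolding S_def V_def by auto
  have pS: "p \<in> S" using SV pV pq by auto
  have finP: "finite P" unfolding P_def
    by (rule finite_subset[of _ "V \<times> V"]) (auto simp: V_def)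
  have pqP: "(p, q) \<in> P" unfolding P_def using pV qV pq Epq sq sV[OF qV] sV[OF pV] by (auto simp: path_edge_def)
  have bij: "bij_betw f P' (P - {(p, q)})"
  proof (rule bij_betw_byWitness[where f' = g])
    show "\<forall>a\<in>P'. g (f a) = a" unfolding P'_def f_def g_def using SV by auto
    show "\<forall>a'\<in>P - {(p, q)}. f (g a') = a'"
    proof
      fix x assume x: "x \<in> P - {(p, q)}"
      obtain a b where ab: "x = (a, b)" by force
      have a: "a \<in> V" "b \<in> V" "E a b" "\<sigma> b = Suc (\<sigma> a)" using x ab unfolding P_def path_edge_def by auto
      show "f (g x) = x"
      proof (cases "a = q")
        case True thus ?thesis using ab a pq unfolding f_def g_def by auto
      next
        case False
        have "\<not> (a = p \<and> \<sigma> b = Suc (\<sigma> q))" using a sq by auto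
        thus ?thesis using ab False unfolding f_def g_def by auto
      qed
    qed
    show "f ` P' \<subseteq> P - {(p, q)}"
    proof
      fix x assume "x \<in> f ` P'"
      then obtain a b where ab: "(a, b) \<in> P'" "x = f (a, b)" by auto
      have a: "a \<in> S" "b \<in> S" "a \<noteq> b" "E a b" "path_edge (n-1) (\<tau> a) (\<tau> b)"
        using ab(1) unfolding P'_def induced_def by auto
      have aV: "a \<in> V" "b \<in> V" "a \<noteq> q" "b \<noteq> q" using a SV by auto
      have tb: "\<tau> b = Suc (\<tau> a)" using a(5) unfolding path_edge_def by auto
      have ne: "\<sigma> a \<noteq> \<sigma> q" "\<sigma> b \<noteq> \<sigma> q" using injD aV qV by blast+
      show "x \<in> P - {(p, q)}"
      proof (cases "a = p \<and> \<sigma> b = Suc (\<sigma> q)")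
        case True
        hence "x = (q, b)" using ab unfolding f_def by auto
        moreover have "b \<noteq> p" using True a by auto
        moreover have "E q b" using se[of b] True aV a by auto
        ultimately show ?thesis unfolding P_def path_edge_def using aV qV True sV[OF aV(2)] sV[OF qV] by auto
      next
        case False
        hence x: "x = (a, b)" using ab unfolding f_def by auto
        have "\<sigma> b = Suc (\<sigma> a)"
        proof -
          have "\<sigma> b = Suc (\<sigma> a)" if "\<sigma> a < \<sigma> q" "\<sigma> b < \<sigma> q" using that tb \<tau> a by auto
          moreover have "\<sigma> b = Suc (\<sigma> a)" if "\<sigma> a > \<sigma> q" "\<sigma> b > \<sigma> q" using that tb \<tau> a by auto
          moreover have False if "\<sigma> a > \<sigma> q" "\<sigma> b < \<sigma> q" using that tb \<tau> a by auto
          moreover have "a = p" if "\<sigma> a < \<sigma> q" "\<sigma> b > \<sigma> q"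
            using that tb \<tau> a sq injD[of a p] aV pV by auto
          moreover have "\<sigma> b = Suc (\<sigma> q)" if "\<sigma> a < \<sigma> q" "\<sigma> b > \<sigma> q"
            using that tb \<tau> a by auto
          ultimately show ?thesis using ne False by (cases "\<sigma> a < \<sigma> q"; cases "\<sigma> b < \<sigma> q") auto
        qed
        thus ?thesis using x aV a sV[OF aV(2)] sV[OF aV(1)] unfolding P_def path_edge_def by auto
      qed
    qed
    show "g ` (P - {(p, q)}) \<subseteq> P'"
    proof
      fix x assume "x \<in> g ` (P - {(p, q)})"
      then obtain a b where ab: "(a, b) \<in> P - {(p, q)}" "x = g (a, b)" by auto
      have a: "a \<in> V" "b \<in> V" "a \<noteq> b" "E a b" "\<sigma> b = Suc (\<sigma> a)"
        using ab(1) unfolding P_def path_edge_def by auto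
      have bq: "b \<noteq> q" using a ab(1) sq injD[of a p] pV by auto
      have bS: "b \<in> S" using SV a bq by auto
      have snb: "\<sigma> b \<le> n" using sV[OF a(2)] by linarith
      show "x \<in> P'"
      proof (cases "a = q")
        case True
        hence x: "x = (p, b)" using ab unfolding g_def by auto
        have bp: "b \<noteq> p" using a True sq by auto
        have "E p b" using se[of b] a True bp bq by auto
        moreover have "\<tau> b = Suc (\<tau> p)" using \<tau>[OF bS] \<tau>[OF pS] a True sq by auto
        moreover have "\<tau> p \<ge> 1" using \<tau>[OF pS] sV[OF pV] sq by auto
        moreover have "\<tau> b \<le> n - 1" using \<tau>[OF bS] a True sq snb by auto
        ultimately show ?thesis using x pS bS bp unfolding P'_def induced_def path_edge_def by auto
      next
        case False
        hence x: "x = (a, b)" using ab unfolding g_def by auto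
        have aS: "a \<in> S" using SV a False by auto
        have ne: "\<sigma> a \<noteq> \<sigma> q" "\<sigma> b \<noteq> \<sigma> q" using injD a qV False bq by blast+
        have "\<tau> b = Suc (\<tau> a)" using \<tau>[OF bS] \<tau>[OF aS] a ne by auto
        moreover have "\<tau> a \<ge> 1" using \<tau>[OF aS] sV[OF a(1)] sV[OF pV] sq by auto
        moreover have "\<tau> b \<le> n - 1"
        proof (cases "\<sigma> b < \<sigma> q")
          case True then show ?thesis using \<tau>[OF bS] sV[OF qV] by simp
        next
          case False then show ?thesis using \<tau>[OF bS] snb by simp
        qed
        ultimately show ?thesis using x aS bS a unfolding P'_def induced_def path_edge_def by auto
      qed
    qed
  qed
  have "card P' = card (P - {(p, q)})" using bij_betw_same_card[OF bij] .
  then have "card P = Suc (card P')" using card_Suc_Diff1[OF finP pqP] by simp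
  moreover have "outdeg V E (path_edge n) \<sigma> = card P" unfolding outdeg_def P_def by simp
  moreover have "outdeg S (induced E S) (path_edge (n - 1)) \<tau> = card P'"
    unfolding outdeg_def P'_def by simp
  ultimately show ?thesis unfolding \<tau>_def by simp
qed

lemma monom_shift: "[:0, 1:] * monom (1::int) k = monom 1 (Suc k)"
  by (simp add: monom_Suc)

theorem mainTheorem11:
  fixes n p q :: nat and E :: "nat \<Rightarrow> nat \<Rightarrow> bool"
  assumes "n \<ge> 2"
    and "simple_digraph {1..n} E"
    and "p \<in> {1..n}" and "q \<in> {1..n}"
    and "E p q" and "\<not> E q p"
    and "sink_equivalent {1..n} E {p, q}"
  shows "ODP_edge {1..n} E {1..n} (path_edge n) p q
         = [:0, 1:] * ODP ({1..n} - {q}) (induced E ({1..n} - {q})) {1..n-1} (path_edge (n - 1))"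
proof -
  define V where "V = {1..n}"
  define S where "S = {1..n} - {q}"
  note pV = assms(3)[folded V_def] and qV = assms(4)[folded V_def]
  have sg: "\<And>a b. E a b \<Longrightarrow> a \<in> V \<and> b \<in> V \<and> a \<noteq> b"
    using assms(2) unfolding simple_digraph_def V_def by blast
  have pq: "p \<noteq> q" using sg assms(5) by blast
  have se: "\<And>b. b \<in> V \<Longrightarrow> b \<noteq> p \<Longrightarrow> b \<noteq> q \<Longrightarrow> E p b = E q b"
    using assms(7) unfolding sink_equivalent_def V_def by auto
  have cardS: "card S = card {1..n-1}" unfolding S_def using assms(4) by simp
  define A where "A = {\<sigma> \<in> bijections V V. path_edge n (\<sigma> p) (\<sigma> q)}"
  define B where "B = bijections S {1..n-1}"
  have Aiff: "\<sigma> \<in> A \<longleftrightarrow> inj_on \<sigma> V \<and> \<sigma> ` V = V \<and> \<sigma> \<in> extensional V \<and> \<sigma> q = Suc (\<sigma> p)" for \<sigma>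
  proof -
    have "\<sigma> ` V = V \<Longrightarrow> 1 \<le> \<sigma> p \<and> \<sigma> p \<le> n \<and> \<sigma> q \<le> n" using pV qV unfolding V_def by auto
    thus ?thesis unfolding A_def bijections_def bij_betw_def path_edge_def using pV qV
      by (auto simp: V_def)
  qed
  have Biff: "\<tau> \<in> B \<longleftrightarrow> inj_on \<tau> S \<and> \<tau> ` S = {1..n-1} \<and> \<tau> \<in> extensional S" for \<tau>
    unfolding B_def bijections_def bij_betw_def by auto
  have lhs: "ODP_edge {1..n} E {1..n} (path_edge n) p q = (\<Sum>\<sigma>\<in>A. monom 1 (outdeg V E (path_edge n) \<sigma>))"
    unfolding ODP_edge_def A_def V_def ..
  have rhs: "[:0, 1:] * ODP ({1..n} - {q}) (induced E ({1..n} - {q})) {1..n-1} (path_edge (n - 1))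
      = (\<Sum>\<tau>\<in>B. monom 1 (Suc (outdeg S (induced E S) (path_edge (n - 1)) \<tau>)))"
    unfolding ODP_def B_def S_def sum_distrib_left monom_shift ..
  show ?thesis unfolding lhs rhs
  proof (rule sum.reindex_bij_witness[where i = "imap n p q" and j = "jmap n q"])
    fix \<sigma> assume "\<sigma> \<in> A"
    hence s: "inj_on \<sigma> V" "\<sigma> ` V = V" "\<sigma> \<in> extensional V" "\<sigma> q = Suc (\<sigma> p)" using Aiff by auto
    have sV: "\<And>v. v \<in> V \<Longrightarrow> 1 \<le> \<sigma> v \<and> \<sigma> v \<le> n" using s(2) unfolding V_def by auto
    have injD: "\<And>a b. a \<in> V \<Longrightarrow> b \<in> V \<Longrightarrow> \<sigma> a = \<sigma> b \<Longrightarrow> a = b" using s(1) by (meson inj_onD)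
    define \<tau> where "\<tau> = jmap n q \<sigma>"
    have \<tau>: "\<And>v. v \<in> S \<Longrightarrow> \<tau> v = (if \<sigma> v < \<sigma> q then \<sigma> v else \<sigma> v - 1)"
      unfolding \<tau>_def jmap_def S_def by auto
    have \<tau>out: "\<And>v. v \<notin> S \<Longrightarrow> \<tau> v = undefined" unfolding \<tau>_def jmap_def S_def by auto
    have SV: "\<And>v. v \<in> S \<longleftrightarrow> v \<in> V \<and> v \<noteq> q" unfolding S_def V_def by auto
    have pS: "p \<in> S" using SV pV pq by auto
    show "imap n p q (jmap n q \<sigma>) = \<sigma>"
    proof
      fix v
      show "imap n p q (jmap n q \<sigma>) v = \<sigma> v"
      proof (cases "v \<in> V")
        case False thus ?thesis using s(3) unfolding imap_def V_def by (auto simp: extensional_def)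
      next
        case True
        show ?thesis
        proof (cases "v = q")
          case True thus ?thesis using \<tau>[OF pS] s(4) unfolding imap_def \<tau>_def[symmetric] using qV V_def by auto
        next
          case False
          hence vS: "v \<in> S" using SV True by auto
          have "\<sigma> v \<noteq> \<sigma> q" using injD True qV False by blast
          thus ?thesis using \<tau>[OF pS] \<tau>[OF vS] s(4) True False unfolding imap_def \<tau>_def[symmetric] V_def by auto
        qed
      qed
    qed
    show "jmap n q \<sigma> \<in> B" unfolding \<tau>_def[symmetric] Biff
    proof (intro conjI)
      have img: "\<tau> ` S \<subseteq> {1..n-1}"
      proof
        fix y assume "y \<in> \<tau> ` S"
        then obtain v where v: "v \<in> S" "y = \<tau> v" by auto
        have vV: "v \<in> V" "v \<noteq> q" using v(1) SV by auto
        have ne: "\<sigma> v \<noteq> \<sigma> q" using injD[OF vV(1) qV] vV(2) by blast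
        have b1: "1 \<le> \<sigma> v" "\<sigma> v \<le> n" using sV[OF vV(1)] by auto
        have b2: "\<sigma> q \<le> n" "1 \<le> \<sigma> p" using sV[OF qV] sV[OF pV] by auto
        show "y \<in> {1..n-1}"
        proof (cases "\<sigma> v < \<sigma> q")
          case True thus ?thesis using \<tau>[OF v(1)] v(2) b1 b2 by simp
        next
          case False thus ?thesis using \<tau>[OF v(1)] v(2) b1 b2 ne s(4) by auto
        qed
      qed
      show inj: "inj_on \<tau> S"
      proof (rule inj_onI)
        fix a b assume ab: "a \<in> S" "b \<in> S" "\<tau> a = \<tau> b"
        have abV: "a \<in> V" "a \<noteq> q" "b \<in> V" "b \<noteq> q" using ab SV by auto
        have "\<sigma> a \<noteq> \<sigma> q" "\<sigma> b \<noteq> \<sigma> q" using injD[OF abV(1) qV] injD[OF abV(3) qV] abV by blast+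
        hence "\<sigma> a = \<sigma> b" using \<tau>[OF ab(1)] \<tau>[OF ab(2)] ab(3)
          by (cases "\<sigma> a < \<sigma> q"; cases "\<sigma> b < \<sigma> q") auto
        thus "a = b" using injD abV by blast
      qed
      show "\<tau> ` S = {1..n-1}" using bij_of_inj_card[OF _ img inj cardS] by (simp add: bij_betw_def)
      show "\<tau> \<in> extensional S" using \<tau>out by (auto simp: extensional_def)
    qed
    show "monom 1 (Suc (outdeg S (induced E S) (path_edge (n - 1)) (jmap n q \<sigma>))) = monom 1 (outdeg V E (path_edge n) \<sigma>)"
    proof -
      have "\<sigma> ` {1..n} \<subseteq> {1..n}" using s(2) unfolding V_def by simp
      note o = outdeg_step[of \<sigma> n p q E, OF s(1)[unfolded V_def] this assms(3) assms(4) pq s(4) se[unfolded V_def] assms(5) sg[unfolded V_def]]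
      show ?thesis using o unfolding V_def S_def by simp
    qed
  next
    fix \<tau> assume "\<tau> \<in> B"
    hence t: "inj_on \<tau> S" "\<tau> ` S = {1..n-1}" "\<tau> \<in> extensional S" using Biff by auto
    have SV: "\<And>v. v \<in> S \<longleftrightarrow> v \<in> V \<and> v \<noteq> q" unfolding S_def V_def by auto
    have pS: "p \<in> S" using SV pV pq by auto
    have tS: "\<And>v. v \<in> S \<Longrightarrow> 1 \<le> \<tau> v \<and> \<tau> v \<le> n - 1" using t(2) by auto
    have injD: "\<And>a b. a \<in> S \<Longrightarrow> b \<in> S \<Longrightarrow> \<tau> a = \<tau> b \<Longrightarrow> a = b" using t(1) by (meson inj_onD)
    define \<sigma> where "\<sigma> = imap n p q \<tau>"
    have \<sigma>q: "\<sigma> q = \<tau> p + 1" unfolding \<sigma>_def imap_def using qV V_def by auto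
    have \<sigma>S: "\<And>v. v \<in> S \<Longrightarrow> \<sigma> v = (if \<tau> v \<le> \<tau> p then \<tau> v else \<tau> v + 1)"
      unfolding \<sigma>_def imap_def using SV V_def by auto
    have \<sigma>out: "\<And>v. v \<notin> V \<Longrightarrow> \<sigma> v = undefined" unfolding \<sigma>_def imap_def V_def by auto
    show "jmap n q (imap n p q \<tau>) = \<tau>"
    proof
      fix v
      show "jmap n q (imap n p q \<tau>) v = \<tau> v"
      proof (cases "v \<in> S")
        case False thus ?thesis using t(3) unfolding jmap_def S_def by (auto simp: extensional_def)
      next
        case True
        thus ?thesis using \<sigma>S[OF True] \<sigma>q unfolding jmap_def \<sigma>_def[symmetric] S_def by auto
      qed
    qed
    show "imap n p q \<tau> \<in> A" unfolding \<sigma>_def[symmetric] Aiff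
    proof (intro conjI)
      have img: "\<sigma> ` V \<subseteq> V"
      proof
        fix y assume "y \<in> \<sigma> ` V"
        then obtain v where v: "v \<in> V" "y = \<sigma> v" by auto
        show "y \<in> V"
        proof (cases "v = q")
          case True thus ?thesis using v \<sigma>q tS[OF pS] assms(1) unfolding V_def by auto
        next
          case False
          hence "v \<in> S" using SV v by auto
          hence vS: "v \<in> S" .
          have "1 \<le> \<tau> v" "\<tau> v \<le> n - 1" using tS[OF vS] by auto
          thus ?thesis using v(2) \<sigma>S[OF vS] assms(1) unfolding V_def by auto
        qed
      qed
      show inj: "inj_on \<sigma> V"
      proof (rule inj_onI)
        fix a b assume ab: "a \<in> V" "b \<in> V" "\<sigma> a = \<sigma> b"
        have noq: False if "x = q" "y \<in> S" "\<sigma> x = \<sigma> y" for x y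
        proof -
          have "\<sigma> y = Suc (\<tau> p)" using that \<sigma>q by simp
          thus False using \<sigma>S[OF that(2)] by (simp split: if_splits)
        qed
        show "a = b"
        proof (cases "a = q")
          case True
          show ?thesis
          proof (rule ccontr)
            assume "a \<noteq> b"
            hence "b \<in> S" using SV ab True by auto
            thus False using noq[OF True _ ab(3)] by blast
          qed
        next
          case aq: False
          hence aS: "a \<in> S" using SV ab by auto
          show ?thesis
          proof (cases "b = q")
            case True thus ?thesis using noq[OF True aS ab(3)[symmetric]] by blast
          next
            case False
            hence bS: "b \<in> S" using SV ab by auto
            have "\<tau> a = \<tau> b" using ab(3) \<sigma>S[OF aS] \<sigma>S[OF bS] by (simp split: if_splits)
            thus ?thesis using injD[OF aS bS] by blast
          qed
        qed
      qed
      show "\<sigma> ` V = V" using bij_of_inj_card[OF _ img inj refl] by (simp add: bij_betw_def V_def)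
      show "\<sigma> \<in> extensional V" using \<sigma>out by (auto simp: extensional_def)
      show "\<sigma> q = Suc (\<sigma> p)" using \<sigma>q \<sigma>S[OF pS] by simp
    qed
  qed
qed

end
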